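(* Let $G$ be a strongly connected digraph. The set-valued map $f_{\mathrm{imcor}}$ is closed on $\operatorname{Adj}(G)$: for every $D\in\operatorname{Adj}(G)$ and all sequences $(D_k)$, $(C_k)$ in $\operatorname{Adj}(G)$ with $D_k\to D$, $C_k\to C$ and $C_k\in f_{\mathrm{imcor}}(D_k)$ for all $k$, we have $C\in f_{\mathrm{imcor}}(D)$.
   Context: A digraph $G=(V,E)$, $V=\{v_1,\dots,v_n\}$, $E\subseteq V\times V$; strongly connected means a directed path exists between every ordered pair of distinct vertices. $\operatorname{Adj}(G)$ is the set of $A=(a_{ij})\in\mathbb{R}^{n\times n}_{\geq0}$ with $a_{ij}>0$ iff $(v_i,v_j)\in E$. Imbalance: $\omega(v_i)=\sum_j a_{ji}-\sum_j a_{ij}$. For $A\in\operatorname{Adj}(G)$, $a_i^*=\min\{a_{ik}:k\neq i,\ a_{ik}\neq0\}$ and $J_i^*=\{j\neq i: a_{ij}=a_i^*\}$. $f_{\mathrm{imcor}}(A)$ is the set of $B\in\operatorname{Adj}(G)$ such that for each $i$ there is $j_i^*\in J_i^*$ with $b_{ij}=a_{ij}+\omega(v_i)$ if $\omega(v_i)>0$ and $j=j_i^*$, and $b_{ij}=a_{ij}$ otherwise (imbalances computed w.r.t. $A$). *)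

theory Defs
  imports "HOL-Analysis.Analysis"
begin

text \<open>Vertices are the elements of a finite type 'n; a digraph is its edge set
  E :: ('n \<times> 'n) set; weighted adjacency matrices are elements of real^'n^'n
  (entry A$i$j is the weight of the edge from i to j).\<close>

definition strongly_connected :: "('n \<times> 'n) set \<Rightarrow> bool" where
  "strongly_connected E \<longleftrightarrow> (\<forall>u v. u \<noteq> v \<longrightarrow> (u, v) \<in> E\<^sup>+)"

definition Adj :: "('n::finite \<times> 'n) set \<Rightarrow> (real^'n^'n) set" where
  "Adj E = {A. (\<forall>i j. A$i$j \<ge> 0) \<and> (\<forall>i j. A$i$j > 0 \<longleftrightarrow> (i, j) \<in> E)}"

definition imbalance :: "real^'n^'n \<Rightarrow> 'n::finite \<Rightarrow> real" where
  "imbalance A i = (\<Sum>j\<in>UNIV. A$j$i) - (\<Sum>j\<in>UNIV. A$i$j)"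

definition astar :: "real^'n^'n \<Rightarrow> 'n::finite \<Rightarrow> real" where
  "astar A i = Min {A$i$k | k. k \<noteq> i \<and> A$i$k \<noteq> 0}"

definition Jstar :: "real^'n^'n \<Rightarrow> 'n::finite \<Rightarrow> 'n set" where
  "Jstar A i = {j. j \<noteq> i \<and> A$i$j = astar A i}"

definition f_imcor :: "('n::finite \<times> 'n) set \<Rightarrow> real^'n^'n \<Rightarrow> (real^'n^'n) set" where
  "f_imcor E A = {B \<in> Adj E. \<forall>i. \<exists>js \<in> Jstar A i. \<forall>j.
      B$i$j = (if imbalance A i > 0 \<and> j = js then A$i$j + imbalance A i else A$i$j)}"

end

theory Submission
  imports Defs
begin

lemma edge_out:
  assumes "strongly_connected E" "j \<noteq> i"
  shows "\<exists>w. w \<noteq> i \<and> (i, w) \<in> E"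
proof -
  have "(i, j) \<in> E\<^sup>+" using assms unfolding strongly_connected_def by auto
  then have "j \<noteq> i \<longrightarrow> (\<exists>w. w \<noteq> i \<and> (i, w) \<in> E)"
  proof (induction rule: trancl_induct)
    case (base y) then show ?case by auto
  next
    case (step y z) then show ?case by (cases "y = i") auto
  qed
  with assms show ?thesis by auto
qed

lemma Jstar_char:
  fixes A :: "real^'n^'n::finite"
  assumes A: "A \<in> Adj E" and w: "(i, w) \<in> E" "w \<noteq> i"
  shows "j \<in> Jstar A i \<longleftrightarrow> (j \<noteq> i \<and> (i, j) \<in> E \<and> (\<forall>m. m \<noteq> i \<and> (i, m) \<in> E \<longrightarrow> A$i$j \<le> A$i$m))"
proof -
  let ?M = "{A$i$k | k. k \<noteq> i \<and> A$i$k \<noteq> 0}"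
  have pos: "\<And>a b. A$a$b > 0 \<longleftrightarrow> (a, b) \<in> E" and nn: "\<And>a b. A$a$b \<ge> 0"
    using A unfolding Adj_def by auto
  have nz: "A$i$k \<noteq> 0 \<longleftrightarrow> (i, k) \<in> E" for k
    using pos[of i k] nn[of i k] by auto
  have fin: "finite ?M"
    by (rule finite_subset[of _ "range (\<lambda>k. A$i$k)"]) auto
  have ne: "?M \<noteq> {}" using w nz by auto
  show ?thesis
  proof
    assume "j \<in> Jstar A i"
    then have j: "j \<noteq> i" "A$i$j = Min ?M" unfolding Jstar_def astar_def by auto
    have "Min ?M \<in> ?M" using fin ne by (rule Min_in)
    then obtain k0 where "A$i$j = A$i$k0" "A$i$k0 \<noteq> 0" unfolding j(2)[symmetric] by blast
    then have "A$i$j \<noteq> 0" by simp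
    then have "(i, j) \<in> E" using nz by blast
    moreover have "A$i$j \<le> A$i$m" if "m \<noteq> i" "(i, m) \<in> E" for m
    proof -
      have "A$i$m \<in> ?M" using that nz by blast
      then show ?thesis unfolding j(2) using fin by (rule Min_le[rotated])
    qed
    ultimately show "j \<noteq> i \<and> (i, j) \<in> E \<and> (\<forall>m. m \<noteq> i \<and> (i, m) \<in> E \<longrightarrow> A$i$j \<le> A$i$m)"
      using j(1) by blast
  next
    assume h: "j \<noteq> i \<and> (i, j) \<in> E \<and> (\<forall>m. m \<noteq> i \<and> (i, m) \<in> E \<longrightarrow> A$i$j \<le> A$i$m)"
    have "Min ?M = A$i$j"
    proof (rule Min_eqI[OF fin])
      fix y assume "y \<in> ?M"
      then obtain k where "y = A$i$k" "k \<noteq> i" "A$i$k \<noteq> 0" by blast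
      then show "A$i$j \<le> y" using h nz by blast
    next
      show "A$i$j \<in> ?M" using h nz by blast
    qed
    then show "j \<in> Jstar A i" using h unfolding Jstar_def astar_def by auto
  qed
qed

lemma freq_le:
  fixes X Y :: "nat \<Rightarrow> real"
  assumes "X \<longlonglongrightarrow> a" "Y \<longlonglongrightarrow> b" "frequently (\<lambda>k. X k \<le> Y k) sequentially"
  shows "a \<le> b"
proof (rule ccontr)
  assume "\<not> a \<le> b"
  have "(\<lambda>k. X k - Y k) \<longlonglongrightarrow> a - b" using assms by (intro tendsto_diff)
  then have "eventually (\<lambda>k. X k - Y k > 0) sequentially"
    using \<open>\<not> a \<le> b\<close> by (intro order_tendstoD(1)) auto
  then have "eventually (\<lambda>k. \<not> X k \<le> Y k) sequentially" by (rule eventually_mono) auto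
  with assms(3) show False by (simp add: frequently_def)
qed

lemma freq_eq:
  fixes X Y :: "nat \<Rightarrow> real"
  assumes "X \<longlonglongrightarrow> a" "Y \<longlonglongrightarrow> b" "frequently (\<lambda>k. X k = Y k) sequentially"
  shows "a = b"
proof -
  have "frequently (\<lambda>k. X k \<le> Y k) sequentially" "frequently (\<lambda>k. Y k \<le> X k) sequentially"
    using assms(3) by (auto elim: frequently_elim1)
  then have "a \<le> b" "b \<le> a" using freq_le[OF assms(1,2)] freq_le[OF assms(2,1)] by blast+
  then show ?thesis by simp
qed

lemma finite_freq:
  fixes P :: "nat \<Rightarrow> 'a::finite \<Rightarrow> bool"
  assumes "\<And>k. \<exists>x. P k x"
  shows "\<exists>x. frequently (\<lambda>k. P k x) sequentially"
proof (rule ccontr)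
  assume "\<nexists>x. frequently (\<lambda>k. P k x) sequentially"
  then have "\<And>x. eventually (\<lambda>k. \<not> P k x) sequentially" by (simp add: frequently_def)
  then have "eventually (\<lambda>k. \<forall>x. \<not> P k x) sequentially" by (rule eventually_all_finite)
  then have "eventually (\<lambda>k. False) sequentially" by (rule eventually_mono) (use assms in blast)
  then show False by simp
qed

theorem lemma4p1:
  fixes E :: "('n::finite \<times> 'n) set"
    and D C :: "real^'n^'n"
    and Ds Cs :: "nat \<Rightarrow> real^'n^'n"
  assumes "strongly_connected E"
    and "D \<in> Adj E"
    and "\<And>k. Ds k \<in> Adj E"
    and "\<And>k. Cs k \<in> Adj E"
    and "Ds \<longlonglongrightarrow> D"
    and "Cs \<longlonglongrightarrow> C"
    and "\<And>k. Cs k \<in> f_imcor E (Ds k)"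
  shows "C \<in> f_imcor E D"
proof -
  have lD: "\<And>a b. (\<lambda>k. Ds k $a$b) \<longlonglongrightarrow> D$a$b" using assms(5) by (intro tendsto_vec_nth)
  have lC: "\<And>a b. (\<lambda>k. Cs k $a$b) \<longlonglongrightarrow> C$a$b" using assms(6) by (intro tendsto_vec_nth)
  have Dnn: "\<And>a b. D$a$b \<ge> 0" and Dpos: "\<And>a b. D$a$b > 0 \<longleftrightarrow> (a, b) \<in> E"
    using assms(2) unfolding Adj_def by auto
  have row: "\<exists>js\<in>Jstar D i. (i, js) \<in> E \<and> (\<forall>j.
      C$i$j = (if imbalance D i > 0 \<and> j = js then D$i$j + imbalance D i else D$i$j))" for i
  proof -
    have ch: "\<And>k. \<exists>js. js \<in> Jstar (Ds k) i \<and> (\<forall>j. Cs k $i$j = (if imbalance (Ds k) i > 0 \<and> j = js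
          then Ds k $i$j + imbalance (Ds k) i else Ds k $i$j))"
      using assms(7) unfolding f_imcor_def by blast
    obtain js0 where "js0 \<in> Jstar (Ds 0) i" using ch by blast
    then have "js0 \<noteq> i" unfolding Jstar_def by auto
    then obtain w where w: "w \<noteq> i" "(i, w) \<in> E" using edge_out[OF assms(1)] by blast
    obtain js where fr: "frequently (\<lambda>k. js \<in> Jstar (Ds k) i \<and> (\<forall>j. Cs k $i$j = (if imbalance (Ds k) i > 0 \<and> j = js
          then Ds k $i$j + imbalance (Ds k) i else Ds k $i$j))) sequentially"
      using finite_freq[of "\<lambda>k js. js \<in> Jstar (Ds k) i \<and> (\<forall>j. Cs k $i$j = (if imbalance (Ds k) i > 0 \<and> j = js
          then Ds k $i$j + imbalance (Ds k) i else Ds k $i$j))", OF ch] by blast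
    have limb: "(\<lambda>k. imbalance (Ds k) i) \<longlonglongrightarrow> imbalance D i"
      unfolding imbalance_def by (intro tendsto_diff tendsto_sum lD)
    obtain k0 where "js \<in> Jstar (Ds k0) i" using frequently_ex[OF fr] by blast
    then have jsE: "js \<noteq> i" "(i, js) \<in> E"
      using Jstar_char[OF assms(3) w(2) w(1)] by auto
    have "D$i$js \<le> D$i$m" if "m \<noteq> i" "(i, m) \<in> E" for m
    proof (rule freq_le[OF lD lD])
      show "frequently (\<lambda>k. Ds k $i$js \<le> Ds k $i$m) sequentially"
        using fr by (rule frequently_elim1) (use Jstar_char[OF assms(3) w(2) w(1)] that in auto)
    qed
    then have jsJ: "js \<in> Jstar D i" using Jstar_char[OF assms(2) w(2) w(1)] jsE by auto
    have ent: "C$i$j = (if imbalance D i > 0 \<and> j = js then D$i$j + imbalance D i else D$i$j)" for j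
    proof (cases "imbalance D i > 0")
      case True
      then have ev: "eventually (\<lambda>k. imbalance (Ds k) i > 0) sequentially"
        using limb by (intro order_tendstoD(1)) auto
      have f2: "frequently (\<lambda>k. Cs k $i$j = (if j = js then Ds k $i$j + imbalance (Ds k) i else Ds k $i$j)) sequentially"
        using fr by (rule frequently_rev_mp) (use ev in \<open>rule eventually_mono\<close>, auto)
      have lim: "(\<lambda>k. if j = js then Ds k $i$j + imbalance (Ds k) i else Ds k $i$j) \<longlonglongrightarrow>
          (if j = js then D$i$j + imbalance D i else D$i$j)"
        by (cases "j = js") (auto intro: tendsto_add lD limb)
      show ?thesis using freq_eq[OF lC lim f2] True by simp
    next
      case False
      have b1: "Ds k $i$j \<le> Cs k $i$j" and b2: "Cs k $i$j \<le> Ds k $i$j + max 0 (imbalance (Ds k) i)" for k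
        using ch[of k] by auto
      have lim2: "(\<lambda>k. Ds k $i$j + max 0 (imbalance (Ds k) i)) \<longlonglongrightarrow> D$i$j + max 0 (imbalance D i)"
        by (intro tendsto_add lD tendsto_max tendsto_const limb)
      have "D$i$j \<le> C$i$j" using b1 by (intro tendsto_le[OF _ lC lD]) auto
      moreover have "C$i$j \<le> D$i$j + max 0 (imbalance D i)"
        using b2 by (intro tendsto_le[OF _ lim2 lC]) auto
      ultimately show ?thesis using False by auto
    qed
    show ?thesis using jsJ jsE ent by blast
  qed
  have CA0: "C$a$b \<ge> 0 \<and> (C$a$b > 0 \<longleftrightarrow> (a, b) \<in> E)" for a b
  proof -
    obtain js where js: "(a, js) \<in> E" "\<forall>j. C$a$j = (if imbalance D a > 0 \<and> j = js then D$a$j + imbalance D a else D$a$j)"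
      using row[of a] by blast
    have cab: "C$a$b = (if imbalance D a > 0 \<and> b = js then D$a$b + imbalance D a else D$a$b)"
      using js(2) by blast
    show ?thesis
    proof (cases "imbalance D a > 0 \<and> b = js")
      case True
      have c1: "C$a$b = D$a$b + imbalance D a" using cab by (simp only: if_P[OF True])
      have "(a, b) \<in> E" using True js(1) by simp
      then show ?thesis using c1 True Dnn[of a b] by simp
    next
      case False
      have c0: "C$a$b = D$a$b" using cab by (simp only: if_not_P[OF False])
      show ?thesis using c0 Dnn[of a b] Dpos[of a b] by simp
    qed
  qed
  have CA: "C \<in> Adj E" unfolding Adj_def using CA0 by blast
  show ?thesis unfolding f_imcor_def
  proof (intro CollectI conjI CA allI)
    fix i show "\<exists>js\<in>Jstar D i. \<forall>j. C$i$j = (if imbalance D i > 0 \<and> j = js then D$i$j + imbalance D i else D$i$j)"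
      using row[of i] by blast
  qed
qed

end
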